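(* Let $d>1$ and let $S$ be a collection of at most $d$ simplices over $[n]$, each of dimension at most $d$. Then all $d$-faces and all $(d-1)$-faces of $K(S)$ can be eliminated by a sequence of elementary $(d-1)$- and $(d-2)$-collapses (starting from $K(S)$).
   Context: A $d$-simplex is a subset of $[n]$ of size $d+1$; a simplicial complex is a family of simplices closed under taking subsets. For a set $S$ of simplices, $K(S)$ is the complex of all subsets of members of $S$. In a simplicial complex $K$, an $i$-face $\zeta$ is exposed if it is contained in exactly one $(i+1)$-face $\tau$ of $K$ (such $\tau$ is then necessarily a maximal face). An elementary $i$-collapse is the removal of such a pair $\zeta,\tau$ from $K$; the result is again a simplicial complex. *)

theory Defs
  imports Main
begin

text \<open>Simplices over [n] are finite nonempty subsets of {1..n}; a d-simplex has card d+1.\<close>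

definition gen_complex :: "nat set set \<Rightarrow> nat set set" where
  "gen_complex S = {\<tau>. \<exists>\<sigma>\<in>S. \<tau> \<subseteq> \<sigma>}"

definition exposed :: "nat set set \<Rightarrow> nat \<Rightarrow> nat set \<Rightarrow> bool" where
  "exposed K i \<zeta> \<longleftrightarrow> \<zeta> \<in> K \<and> card \<zeta> = i + 1 \<and>
     (\<exists>!\<tau>. \<tau> \<in> K \<and> card \<tau> = i + 2 \<and> \<zeta> \<subseteq> \<tau>)"

definition elem_collapse :: "nat \<Rightarrow> nat set set \<Rightarrow> nat set set \<Rightarrow> bool" where
  "elem_collapse i K K' \<longleftrightarrow> (\<exists>\<zeta> \<tau>. exposed K i \<zeta> \<and> \<tau> \<in> K \<and> card \<tau> = i + 2 \<and>
     \<zeta> \<subseteq> \<tau> \<and> K' = K - {\<zeta>, \<tau>})"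

end

theory Submission
  imports Defs
begin


definition hi :: "nat \<Rightarrow> nat set set \<Rightarrow> nat set set" where
  "hi d K = {\<tau>\<in>K. d \<le> card \<tau>}"
definition mid :: "nat \<Rightarrow> nat set set \<Rightarrow> nat set set" where
  "mid d K = {\<tau>\<in>K. card \<tau> + 1 = d}"
definition stp :: "nat \<Rightarrow> nat set set \<Rightarrow> nat set set \<Rightarrow> bool" where
  "stp d K K' \<longleftrightarrow> elem_collapse (d - 1) K K' \<or> elem_collapse (d - 2) K K'"

lemma gen_iff: "\<tau> \<in> gen_complex T \<longleftrightarrow> (\<exists>\<sigma>\<in>T. \<tau> \<subseteq> \<sigma>)"
  by (simp add: gen_complex_def)

lemma collapse_intro:
  assumes "\<zeta> \<in> K" "card \<zeta> = i+1" "\<tau> \<in> K" "card \<tau> = i+2" "\<zeta> \<subseteq> \<tau>"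
    "\<And>\<tau>'. \<tau>'\<in>K \<Longrightarrow> card \<tau>' = i+2 \<Longrightarrow> \<zeta> \<subseteq> \<tau>' \<Longrightarrow> \<tau>' = \<tau>"
  shows "elem_collapse i K (K - {\<zeta>,\<tau>})"
proof -
  have ex: "\<exists>!\<tau>'. \<tau>' \<in> K \<and> card \<tau>' = i+2 \<and> \<zeta> \<subseteq> \<tau>'"
  proof (rule ex1I[of _ \<tau>])
    show "\<tau> \<in> K \<and> card \<tau> = i+2 \<and> \<zeta> \<subseteq> \<tau>" using assms(3,4,5) by simp
    fix \<tau>' assume "\<tau>' \<in> K \<and> card \<tau>' = i+2 \<and> \<zeta> \<subseteq> \<tau>'"
    then show "\<tau>' = \<tau>" using assms(6) by simp
  qed
  have "exposed K i \<zeta>" unfolding exposed_def using assms(1,2) ex by simp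
  then show ?thesis unfolding elem_collapse_def
    by (intro exI[of _ \<zeta>] exI[of _ \<tau>]) (simp add: assms(3,4,5))
qed

lemma count_lemma:
  assumes "finite T" "\<forall>\<rho>\<in>D. \<exists>\<sigma>'\<in>T. \<rho> \<subseteq> \<sigma>'"
    "\<forall>\<rho>1\<in>D. \<forall>\<rho>2\<in>D. \<rho>1 \<noteq> \<rho>2 \<longrightarrow> \<not>(\<exists>\<sigma>'\<in>T. \<rho>1 \<union> \<rho>2 \<subseteq> \<sigma>')"
  shows "card D \<le> card T"
proof -
  define f where "f \<rho> = (SOME \<sigma>'. \<sigma>'\<in>T \<and> \<rho> \<subseteq> \<sigma>')" for \<rho>
  have f: "f \<rho> \<in> T \<and> \<rho> \<subseteq> f \<rho>" if "\<rho>\<in>D" for \<rho>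
  proof -
    from assms(2) that have "\<exists>\<sigma>'. \<sigma>'\<in>T \<and> \<rho> \<subseteq> \<sigma>'" by blast
    then show ?thesis unfolding f_def by (rule someI_ex)
  qed
  have "inj_on f D"
  proof (rule inj_onI)
    fix a b assume ab: "a \<in> D" "b \<in> D" "f a = f b"
    show "a = b"
    proof (rule ccontr)
      assume "a \<noteq> b"
      have "f a \<in> T" "a \<subseteq> f a" "b \<subseteq> f a" using f[OF ab(1)] f[OF ab(2)] ab(3) by auto
      then have "\<exists>\<sigma>'\<in>T. a \<union> b \<subseteq> \<sigma>'" by blast
      then show False using assms(3) ab(1,2) \<open>a \<noteq> b\<close> by blast
    qed
  qed
  moreover have "f ` D \<subseteq> T" using f by auto
  ultimately show ?thesis using card_inj_on_le assms(1) by blast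
qed

lemma exists_free_facet:
  assumes "finite T" "finite \<sigma>" "card T < card \<sigma>" "\<forall>\<sigma>'\<in>T. \<not> \<sigma> \<subseteq> \<sigma>'"
  shows "\<exists>v\<in>\<sigma>. \<forall>\<sigma>'\<in>T. \<not> (\<sigma> - {v}) \<subseteq> \<sigma>'"
proof (rule ccontr)
  assume "\<not> ?thesis"
  then have all: "\<forall>v\<in>\<sigma>. \<exists>\<sigma>'\<in>T. \<sigma>-{v} \<subseteq> \<sigma>'" by blast
  have inj: "inj_on (\<lambda>v. \<sigma>-{v}) \<sigma>" by (auto simp: inj_on_def)
  have "card ((\<lambda>v. \<sigma>-{v}) ` \<sigma>) \<le> card T"
  proof (rule count_lemma[OF assms(1)])
    show "\<forall>\<rho>\<in>(\<lambda>v. \<sigma>-{v}) ` \<sigma>. \<exists>\<sigma>'\<in>T. \<rho> \<subseteq> \<sigma>'" using all by blast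
    show "\<forall>\<rho>1\<in>(\<lambda>v. \<sigma>-{v}) ` \<sigma>. \<forall>\<rho>2\<in>(\<lambda>v. \<sigma>-{v}) ` \<sigma>. \<rho>1 \<noteq> \<rho>2 \<longrightarrow> \<not>(\<exists>\<sigma>'\<in>T. \<rho>1 \<union> \<rho>2 \<subseteq> \<sigma>')"
    proof (intro ballI impI)
      fix \<rho>1 \<rho>2 assume "\<rho>1 \<in> (\<lambda>v. \<sigma>-{v}) ` \<sigma>" "\<rho>2 \<in> (\<lambda>v. \<sigma>-{v}) ` \<sigma>" "\<rho>1 \<noteq> \<rho>2"
      then have "\<sigma> \<subseteq> \<rho>1 \<union> \<rho>2" by blast
      then show "\<not>(\<exists>\<sigma>'\<in>T. \<rho>1 \<union> \<rho>2 \<subseteq> \<sigma>')" using assms(4) by blast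
    qed
  qed
  with card_image[OF inj] assms(3) show False by simp
qed

lemma facet_char:
  assumes "finite \<sigma>" "\<tau> \<subseteq> \<sigma>" "card \<sigma> \<le> card \<tau> + 1"
  shows "\<tau> = \<sigma> \<or> (\<exists>v\<in>\<sigma>. \<tau> = \<sigma> - {v})"
proof (cases "\<tau> = \<sigma>")
  case False
  then obtain v where v: "v \<in> \<sigma>" "v \<notin> \<tau>" using assms(2) by blast
  then have "\<tau> \<subseteq> \<sigma> - {v}" using assms(2) by blast
  moreover have "card (\<sigma> - {v}) \<le> card \<tau>" using card_Diff_singleton[OF v(1)] assms(3) by simp
  moreover have "card \<tau> \<le> card (\<sigma> - {v})" using card_mono[OF _ \<open>\<tau> \<subseteq> \<sigma> - {v}\<close>] assms(1) by simp
  ultimately have "\<tau> = \<sigma> - {v}" using card_subset_eq[of "\<sigma> - {v}" \<tau>] assms(1) by simp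
  then show ?thesis using v by blast
qed simp



lemma exists_free_pair:
  assumes fin: "finite T" "finite \<sigma>" and nsub: "\<forall>\<sigma>'\<in>T. \<not> \<sigma> \<subseteq> \<sigma>'"
    and P_def: "P = {v\<in>\<sigma>. \<forall>\<sigma>'\<in>T. \<not> \<sigma>-{v} \<subseteq> \<sigma>'}"
    and FP: "F \<subseteq> P" and Fne: "F \<noteq> {}" and p0: "p0 \<in> P" "p0 \<notin> F"
    and cT: "card T + 2 \<le> card \<sigma>"
  shows "\<exists>p\<in>F. \<exists>q\<in>P-F. \<forall>\<sigma>'\<in>T. \<not> \<sigma> - {p,q} \<subseteq> \<sigma>'"
proof (rule ccontr)
  assume "\<not> ?thesis"
  then have all: "\<forall>p\<in>F. \<forall>q\<in>P-F. \<exists>\<sigma>'\<in>T. \<sigma>-{p,q} \<subseteq> \<sigma>'" by blast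
  define R where "R = P - F"
  define D1 where "D1 = (\<lambda>v. \<sigma>-{v}) ` (\<sigma>-P)"
  define D2 where "D2 = (\<lambda>(p,q). \<sigma>-{p,q}) ` (F\<times>R)"
  have Ps: "P \<subseteq> \<sigma>" using P_def by blast
  have finP: "finite P" using Ps fin(2) finite_subset by blast
  have finF: "finite F" using FP finP finite_subset by blast
  have finR: "finite R" unfolding R_def using finP by blast
  have inj1: "inj_on (\<lambda>v. \<sigma>-{v}) (\<sigma>-P)" by (auto simp: inj_on_def)
  have inj2: "inj_on (\<lambda>(p,q). \<sigma>-{p,q}) (F\<times>R)"
  proof (rule inj_onI)
    fix x y assume xy: "x \<in> F\<times>R" "y \<in> F\<times>R" "(\<lambda>(p,q). \<sigma>-{p,q}) x = (\<lambda>(p,q). \<sigma>-{p,q}) y"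
    obtain p q where x: "x = (p,q)" by force
    obtain p' q' where y: "y = (p',q')" by force
    have m: "p \<in> F" "q \<in> R" "p' \<in> F" "q' \<in> R" using xy x y by auto
    have s: "p \<in> \<sigma>" "q \<in> \<sigma>" "p' \<in> \<sigma>" "q' \<in> \<sigma>" using m FP Ps R_def by auto
    have e: "\<sigma>-{p,q} = \<sigma>-{p',q'}" using xy x y by simp
    have "{p,q} = {p',q'}"
    proof
      show "{p,q} \<subseteq> {p',q'}" using e s by blast
      show "{p',q'} \<subseteq> {p,q}" using e s by blast
    qed
    moreover have "p \<noteq> q'" "q \<noteq> p'" using m R_def by auto
    ultimately show "x = y" using x y by (auto simp: doubleton_eq_iff)
  qed
  have disj: "D1 \<inter> D2 = {}"
  proof (rule ccontr)
    assume "D1 \<inter> D2 \<noteq> {}"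
    then obtain v p q where v: "v \<in> \<sigma>-P" and pq: "p \<in> F" "q \<in> R" and e: "\<sigma>-{v} = \<sigma>-{p,q}"
      unfolding D1_def D2_def by auto
    have "p \<noteq> q" "p \<in> \<sigma>" "q \<in> \<sigma>" "v \<noteq> p" using pq R_def FP Ps v by auto
    then show False using e by blast
  qed
  have cD: "card (D1 \<union> D2) = card (\<sigma>-P) + card F * card R"
  proof -
    have "finite D1" "finite D2" unfolding D1_def D2_def using fin finF finR by auto
    then have "card (D1 \<union> D2) = card D1 + card D2" using disj card_Un_disjoint by blast
    also have "card D1 = card (\<sigma>-P)" unfolding D1_def using card_image[OF inj1] .
    also have "card D2 = card F * card R" unfolding D2_def using card_image[OF inj2] card_cartesian_product by simp
    finally show ?thesis .
  qed
  have "card (D1 \<union> D2) \<le> card T"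
  proof (rule count_lemma[OF fin(1)])
    show "\<forall>\<rho>\<in>D1 \<union> D2. \<exists>\<sigma>'\<in>T. \<rho> \<subseteq> \<sigma>'"
    proof
      fix \<rho> assume "\<rho> \<in> D1 \<union> D2"
      then show "\<exists>\<sigma>'\<in>T. \<rho> \<subseteq> \<sigma>'"
      proof
        assume "\<rho> \<in> D1"
        then obtain v where "v \<in> \<sigma>" "v \<notin> P" "\<rho> = \<sigma>-{v}" unfolding D1_def by auto
        then show ?thesis using P_def by blast
      next
        assume "\<rho> \<in> D2"
        then obtain p q where "p \<in> F" "q \<in> R" "\<rho> = \<sigma>-{p,q}" unfolding D2_def by auto
        then show ?thesis using all R_def by blast
      qed
    qed
    have key: "\<exists>x\<in>P. \<sigma> - {x} \<subseteq> \<rho>1 \<union> \<rho>2" if r: "\<rho>1 \<in> D1 \<union> D2" "\<rho>2 \<in> D1 \<union> D2" "\<rho>1 \<noteq> \<rho>2" for \<rho>1 \<rho>2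
    proof -
      have A: "\<exists>x\<in>P. \<sigma> - {x} \<subseteq> \<rho>1 \<union> \<rho>2" if hA: "\<rho>1 \<in> D1" "\<rho>2 \<in> D1" "\<rho>1 \<noteq> \<rho>2" for \<rho>1 \<rho>2
      proof -
        obtain v where "v \<in> \<sigma>" "\<rho>1 = \<sigma>-{v}" using hA(1) unfolding D1_def by auto
        moreover obtain w where "w \<in> \<sigma>" "\<rho>2 = \<sigma>-{w}" using hA(2) unfolding D1_def by auto
        ultimately have "v \<in> \<sigma>" "w \<in> \<sigma>" "\<rho>1 = \<sigma>-{v}" "\<rho>2 = \<sigma>-{w}" "v \<noteq> w" using hA by auto
        then have "\<sigma> - {p0} \<subseteq> \<rho>1 \<union> \<rho>2" by blast
        then show ?thesis using p0 by blast
      qed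
      have B: "\<exists>x\<in>P. \<sigma> - {x} \<subseteq> \<rho>1 \<union> \<rho>2" if hB: "\<rho>1 \<in> D1" "\<rho>2 \<in> D2" for \<rho>1 \<rho>2
      proof -
        obtain v where v: "v \<in> \<sigma>" "v \<notin> P" "\<rho>1 = \<sigma>-{v}" using hB(1) unfolding D1_def by auto
        obtain p q where pq: "p \<in> F" "q \<in> R" "\<rho>2 = \<sigma>-{p,q}" using hB(2) unfolding D2_def by auto
        have "v \<noteq> p" "v \<noteq> q" "p \<in> P" using v pq R_def FP by auto
        then have "\<sigma> - {p} \<subseteq> \<rho>1 \<union> \<rho>2" using v pq by blast
        then show ?thesis using \<open>p \<in> P\<close> by blast
      qed
      have C: "\<exists>x\<in>P. \<sigma> - {x} \<subseteq> \<rho>1 \<union> \<rho>2" if hC: "\<rho>1 \<in> D2" "\<rho>2 \<in> D2" "\<rho>1 \<noteq> \<rho>2" for \<rho>1 \<rho>2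
      proof -
        obtain p q where pq: "p \<in> F" "q \<in> R" "\<rho>1 = \<sigma>-{p,q}" using hC(1) unfolding D2_def by auto
        obtain p' q' where pq': "p' \<in> F" "q' \<in> R" "\<rho>2 = \<sigma>-{p',q'}" using hC(2) unfolding D2_def by auto
        have d: "p \<noteq> q'" "q \<noteq> p'" "p \<noteq> q" "p' \<noteq> q'" "p \<in> P" "q \<in> P" using pq pq' R_def FP by auto
        show ?thesis
        proof (cases "q = q'")
          case True
          then have "p \<noteq> p'" using hC pq pq' by auto
          then have "\<sigma> - {q} \<subseteq> \<rho>1 \<union> \<rho>2" using pq pq' d by blast
          then show ?thesis using d by blast
        next
          case False
          then have "\<sigma> - {p} \<subseteq> \<rho>1 \<union> \<rho>2" using pq pq' d by blast
          then show ?thesis using d by blast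
        qed
      qed
      from r show ?thesis
        using A B[of \<rho>1 \<rho>2] B[of \<rho>2 \<rho>1] C by (auto simp: Un_commute)
    qed
    show "\<forall>\<rho>1\<in>D1 \<union> D2. \<forall>\<rho>2\<in>D1 \<union> D2. \<rho>1 \<noteq> \<rho>2 \<longrightarrow> \<not>(\<exists>\<sigma>'\<in>T. \<rho>1 \<union> \<rho>2 \<subseteq> \<sigma>')"
    proof (intro ballI impI notI)
      fix \<rho>1 \<rho>2 assume r: "\<rho>1 \<in> D1 \<union> D2" "\<rho>2 \<in> D1 \<union> D2" "\<rho>1 \<noteq> \<rho>2" and "\<exists>\<sigma>'\<in>T. \<rho>1 \<union> \<rho>2 \<subseteq> \<sigma>'"
      then obtain \<sigma>' where "\<sigma>' \<in> T" "\<rho>1 \<union> \<rho>2 \<subseteq> \<sigma>'" by blast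
      moreover obtain x where "x \<in> P" "\<sigma> - {x} \<subseteq> \<rho>1 \<union> \<rho>2" using key[OF r] by blast
      ultimately show False using P_def by blast
    qed
  qed
  with cD have ineq: "card (\<sigma>-P) + card F * card R \<le> card T" by simp
  have cP: "card P = card F + card R"
  proof -
    have "card R = card P - card F" unfolding R_def using card_Diff_subset[OF finF FP] .
    moreover have "card F \<le> card P" using card_mono[OF finP FP] .
    ultimately show ?thesis by simp
  qed
  have cSP: "card (\<sigma>-P) = card \<sigma> - card P" using card_Diff_subset[OF finP Ps] .
  have "card P \<le> card \<sigma>" using card_mono[OF fin(2) Ps] .
  have f1: "card F \<ge> 1" using Fne finF by (simp add: Suc_le_eq card_gt_0_iff)
  have "p0 \<in> R" using p0 R_def by blast
  then have "R \<noteq> {}" by blast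
  then have r1: "card R \<ge> 1" using finR by (simp add: Suc_le_eq card_gt_0_iff)
  have "card F * card R \<ge> card F + card R - 1"
  proof -
    obtain a where a: "card F = Suc a" using f1 by (cases "card F") auto
    obtain b where b: "card R = Suc b" using r1 by (cases "card R") auto
    show ?thesis unfolding a b by simp
  qed
  then show False using ineq cP cSP cT \<open>card P \<le> card \<sigma>\<close> f1 r1 by linarith
qed



lemma phase:
  fixes d :: nat
  assumes d: "d > 1" and fin: "finite T" "finite \<sigma>" and c\<sigma>: "card \<sigma> = d+1"
    and nsub: "\<forall>\<sigma>'\<in>T. \<not> \<sigma> \<subseteq> \<sigma>'"
    and cT: "card T + 2 \<le> card \<sigma>"
    and P_def: "P = {v\<in>\<sigma>. \<forall>\<sigma>'\<in>T. \<not> \<sigma>-{v} \<subseteq> \<sigma>'}" and p0: "p0 \<in> P"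
  shows "F \<subseteq> P \<Longrightarrow> p0 \<notin> F \<Longrightarrow> hi d K = hi d (gen_complex T) \<union> (\<lambda>p. \<sigma>-{p}) ` F
     \<Longrightarrow> mid d (gen_complex T) \<subseteq> K
     \<Longrightarrow> (\<forall>\<rho>\<subseteq>\<sigma>. card \<rho> + 1 = d \<longrightarrow> (\<exists>p\<in>F. p\<notin>\<rho>) \<longrightarrow> \<rho>\<in>K)
     \<Longrightarrow> \<exists>K1. (stp d)\<^sup>*\<^sup>* K K1 \<and> hi d K1 = hi d (gen_complex T) \<and> mid d (gen_complex T) \<subseteq> K1"
proof (induction "card F" arbitrary: F K rule: less_induct)
  case less
  note FP = less.prems(1) and p0F = less.prems(2) and hiK = less.prems(3)
    and midK = less.prems(4) and cK = less.prems(5)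
  have Ps: "P \<subseteq> \<sigma>" using P_def by blast
  have finF: "finite F" using finite_subset[OF subset_trans[OF FP Ps] fin(2)] .
  show ?case
  proof (cases "F = {}")
    case True
    have "hi d K = hi d (gen_complex T)" using hiK True by simp
    moreover have "(stp d)\<^sup>*\<^sup>* K K" by (rule rtranclp.rtrancl_refl)
    ultimately show ?thesis using midK by blast
  next
    case False
    obtain p q where p: "p \<in> F" and q: "q \<in> P - F" and free: "\<forall>\<sigma>'\<in>T. \<not> \<sigma> - {p,q} \<subseteq> \<sigma>'"
      using exists_free_pair[OF fin nsub P_def FP False p0 p0F cT] by blast
    define \<rho>0 where "\<rho>0 = \<sigma> - {p,q}"
    define \<zeta> where "\<zeta> = \<sigma> - {p}"
    have pq: "p \<noteq> q" "p \<in> \<sigma>" "q \<in> \<sigma>" "p \<in> P" "q \<in> P" "q \<notin> F" using p q FP Ps by auto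
    have c\<zeta>: "card \<zeta> = d" unfolding \<zeta>_def using card_Diff_singleton[OF pq(2)] c\<sigma> by simp
    have c\<rho>: "card \<rho>0 + 1 = d"
    proof -
      have "card \<rho>0 = card \<sigma> - card {p,q}" unfolding \<rho>0_def
        using card_Diff_subset[of "{p,q}" \<sigma>] pq by auto
      then show ?thesis using pq c\<sigma> d by simp
    qed
    have \<rho>K: "\<rho>0 \<in> K" using cK c\<rho> p unfolding \<rho>0_def by blast
    have \<zeta>hi: "\<zeta> \<in> hi d K" using hiK p unfolding \<zeta>_def by blast
    then have \<zeta>K: "\<zeta> \<in> K" unfolding hi_def by blast
    have \<zeta>notgen: "\<zeta> \<notin> gen_complex T" using pq(4) P_def unfolding \<zeta>_def gen_iff by blast
    have \<rho>notgen: "\<rho>0 \<notin> gen_complex T" using free unfolding \<rho>0_def gen_iff by blast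
    have coll: "elem_collapse (d-2) K (K - {\<rho>0, \<zeta>})"
    proof (rule collapse_intro[OF \<rho>K _ \<zeta>K])
      show "card \<rho>0 = d - 2 + 1" using c\<rho> d by simp
      show "card \<zeta> = d - 2 + 2" using c\<zeta> d by simp
      show "\<rho>0 \<subseteq> \<zeta>" unfolding \<rho>0_def \<zeta>_def by blast
      fix \<tau>' assume t: "\<tau>' \<in> K" "card \<tau>' = d - 2 + 2" "\<rho>0 \<subseteq> \<tau>'"
      then have "\<tau>' \<in> hi d K" unfolding hi_def using d by simp
      then have "\<tau>' \<in> hi d (gen_complex T) \<or> (\<exists>p'\<in>F. \<tau>' = \<sigma> - {p'})" using hiK by blast
      then show "\<tau>' = \<zeta>"
      proof
        assume "\<tau>' \<in> hi d (gen_complex T)"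
        then have "\<rho>0 \<in> gen_complex T" using t(3) unfolding hi_def gen_iff by blast
        then show ?thesis using \<rho>notgen by blast
      next
        assume "\<exists>p'\<in>F. \<tau>' = \<sigma> - {p'}"
        then obtain p' where p': "p' \<in> F" "\<tau>' = \<sigma> - {p'}" by blast
        have "p' \<in> \<sigma>" using p' FP Ps by blast
        then have "p' \<in> {p,q}" using t(3) p' unfolding \<rho>0_def by blast
        then have "p' = p" using p' pq by blast
        then show ?thesis using p' \<zeta>_def by simp
      qed
    qed
    define K2 where "K2 = K - {\<rho>0, \<zeta>}"
    define F' where "F' = F - {p}"
    have F'P: "F' \<subseteq> P" "p0 \<notin> F'" unfolding F'_def using FP p0F by blast+
    have lt: "card F' < card F" unfolding F'_def using card_Diff1_less[OF finF p] .
    have hiK2: "hi d K2 = hi d (gen_complex T) \<union> (\<lambda>p. \<sigma>-{p}) ` F'"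
    proof
      show "hi d K2 \<subseteq> hi d (gen_complex T) \<union> (\<lambda>p. \<sigma>-{p}) ` F'"
      proof
        fix \<tau> assume "\<tau> \<in> hi d K2"
        then have t: "\<tau> \<in> hi d K" "\<tau> \<noteq> \<zeta>" unfolding K2_def hi_def by auto
        from t(1) hiK have "\<tau> \<in> hi d (gen_complex T) \<or> \<tau> \<in> (\<lambda>p. \<sigma>-{p}) ` F" by blast
        then show "\<tau> \<in> hi d (gen_complex T) \<union> (\<lambda>p. \<sigma>-{p}) ` F'"
        proof
          assume "\<tau> \<in> (\<lambda>p. \<sigma>-{p}) ` F"
          then obtain p' where "p' \<in> F" "\<tau> = \<sigma> - {p'}" by blast
          moreover then have "p' \<noteq> p" using t(2) \<zeta>_def by blast
          ultimately show ?thesis unfolding F'_def by blast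
        qed blast
      qed
      show "hi d (gen_complex T) \<union> (\<lambda>p. \<sigma>-{p}) ` F' \<subseteq> hi d K2"
      proof
        fix \<tau> assume a: "\<tau> \<in> hi d (gen_complex T) \<union> (\<lambda>p. \<sigma>-{p}) ` F'"
        then have "\<tau> \<in> hi d K" using hiK unfolding F'_def by blast
        moreover have "\<tau> \<noteq> \<zeta>"
        proof
          assume e: "\<tau> = \<zeta>"
          with a \<zeta>notgen have "\<zeta> \<in> (\<lambda>p. \<sigma>-{p}) ` F'" unfolding hi_def by blast
          then obtain p' where "p' \<in> F'" "\<sigma> - {p} = \<sigma> - {p'}" unfolding \<zeta>_def by blast
          moreover have "p' \<in> \<sigma>" using \<open>p' \<in> F'\<close> F'P Ps by blast
          ultimately show False using pq F'_def by blast
        qed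
        moreover have "\<tau> \<noteq> \<rho>0" using calculation(1) c\<rho> unfolding hi_def by auto
        ultimately show "\<tau> \<in> hi d K2" unfolding K2_def hi_def by auto
      qed
    qed
    have midK2: "mid d (gen_complex T) \<subseteq> K2"
    proof
      fix \<tau> assume a: "\<tau> \<in> mid d (gen_complex T)"
      then have "\<tau> \<in> K" using midK by blast
      moreover have "\<tau> \<noteq> \<rho>0" using a \<rho>notgen unfolding mid_def by blast
      moreover have "\<tau> \<noteq> \<zeta>" using a c\<zeta> unfolding mid_def by auto
      ultimately show "\<tau> \<in> K2" unfolding K2_def by blast
    qed
    have cK2: "\<forall>\<rho>\<subseteq>\<sigma>. card \<rho> + 1 = d \<longrightarrow> (\<exists>p\<in>F'. p\<notin>\<rho>) \<longrightarrow> \<rho>\<in>K2"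
    proof (intro allI impI)
      fix \<rho> assume r: "\<rho> \<subseteq> \<sigma>" "card \<rho> + 1 = d" "\<exists>p\<in>F'. p\<notin>\<rho>"
      then obtain p' where p': "p' \<in> F'" "p' \<notin> \<rho>" by blast
      have "\<rho> \<in> K" using cK r p' F'_def by blast
      moreover have "p' \<in> \<rho>0" using p' F'_def FP Ps pq unfolding \<rho>0_def by auto
      then have "\<rho> \<noteq> \<rho>0" using p' by blast
      moreover have "\<rho> \<noteq> \<zeta>" using r c\<zeta> by auto
      ultimately show "\<rho> \<in> K2" unfolding K2_def by blast
    qed
    obtain K1 where K1: "(stp d)\<^sup>*\<^sup>* K2 K1" "hi d K1 = hi d (gen_complex T)" "mid d (gen_complex T) \<subseteq> K1"
      using less.hyps[OF lt F'P hiK2 midK2 cK2] by blast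
    have "stp d K K2" using coll unfolding stp_def K2_def by blast
    then have "(stp d)\<^sup>*\<^sup>* K K1" using K1(1) by (rule converse_rtranclp_into_rtranclp)
    then show ?thesis using K1 by blast
  qed
qed



lemma genI: "gen_complex (insert \<sigma> T) = Pow \<sigma> \<union> gen_complex T"
  by (auto simp: gen_complex_def)

lemma reduce:
  fixes d :: nat
  assumes d: "d > 1" and finT: "finite T" and fins: "finite \<sigma>" and cs: "card \<sigma> \<le> d+1"
    and cT: "card T + 1 \<le> d"
    and hiK: "hi d K = hi d (gen_complex (insert \<sigma> T))"
    and midK: "mid d (gen_complex (insert \<sigma> T)) \<subseteq> K"
  shows "\<exists>K1. (stp d)\<^sup>*\<^sup>* K K1 \<and> hi d K1 = hi d (gen_complex T) \<and> mid d (gen_complex T) \<subseteq> K1"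
proof (cases "\<exists>\<sigma>'\<in>T. \<sigma> \<subseteq> \<sigma>'")
  case True
  have "Pow \<sigma> \<subseteq> gen_complex T" using True unfolding gen_complex_def by blast
  then have "gen_complex (insert \<sigma> T) = gen_complex T" unfolding genI by blast
  then show ?thesis using hiK midK by (intro exI[of _ K]) auto
next
  case False
  then have nsub: "\<forall>\<sigma>'\<in>T. \<not> \<sigma> \<subseteq> \<sigma>'" by blast
  have snotgen: "\<sigma> \<notin> gen_complex T" using nsub by (simp add: gen_iff)
  have hiI: "\<tau> \<in> hi d K" if "\<tau> \<subseteq> \<sigma>" "d \<le> card \<tau>" for \<tau>
    using that hiK unfolding hi_def genI by blast
  have midI: "\<tau> \<in> K" if "\<tau> \<subseteq> \<sigma>" "card \<tau> + 1 = d" for \<tau>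
    using that midK unfolding mid_def genI by blast
  have hiD: "\<tau> \<subseteq> \<sigma> \<or> \<tau> \<in> gen_complex T" if "\<tau> \<in> hi d K" for \<tau>
    using that hiK unfolding hi_def genI by blast
  have hiT: "\<tau> \<in> K" if "\<tau> \<in> hi d (gen_complex T)" for \<tau>
    using that hiK unfolding hi_def genI by blast
  have midT: "\<tau> \<in> K" if "\<tau> \<in> mid d (gen_complex T)" for \<tau>
    using that midK unfolding mid_def genI by blast
  consider "card \<sigma> < d" | "card \<sigma> = d" | "card \<sigma> = d+1" using cs by linarith
  then show ?thesis
  proof cases
    case 1
    have "hi d K = hi d (gen_complex T)"
    proof
      show "hi d K \<subseteq> hi d (gen_complex T)"
      proof
        fix \<tau> assume a: "\<tau> \<in> hi d K"
        have "\<not> \<tau> \<subseteq> \<sigma>"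
        proof
          assume "\<tau> \<subseteq> \<sigma>"
          then have "card \<tau> \<le> card \<sigma>" using card_mono[OF fins] by blast
          then show False using a 1 unfolding hi_def by simp
        qed
        then show "\<tau> \<in> hi d (gen_complex T)" using hiD[OF a] a unfolding hi_def by blast
      qed
      show "hi d (gen_complex T) \<subseteq> hi d K" using hiT unfolding hi_def by blast
    qed
    moreover have "mid d (gen_complex T) \<subseteq> K" using midT by blast
    ultimately show ?thesis by (intro exI[of _ K]) auto
  next
    case 2
    have "card T < card \<sigma>" using 2 cT by simp
    then obtain v where v: "v \<in> \<sigma>" and free: "\<forall>\<sigma>'\<in>T. \<not> \<sigma>-{v} \<subseteq> \<sigma>'"
      using exists_free_facet[OF finT fins _ nsub] by blast
    define \<rho> where "\<rho> = \<sigma> - {v}"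
    have c\<rho>: "card \<rho> + 1 = d" using card_Diff_singleton[OF v] 2 d unfolding \<rho>_def by simp
    have \<rho>notgen: "\<rho> \<notin> gen_complex T" using free unfolding \<rho>_def by (simp add: gen_iff)
    have \<rho>K: "\<rho> \<in> K" using midI[of \<rho>] c\<rho> unfolding \<rho>_def by blast
    have \<sigma>K: "\<sigma> \<in> K" using hiI[of \<sigma>] 2 unfolding hi_def by simp
    have coll: "elem_collapse (d-2) K (K - {\<rho>,\<sigma>})"
    proof (rule collapse_intro[OF \<rho>K _ \<sigma>K])
      show "card \<rho> = d - 2 + 1" using c\<rho> d by simp
      show "card \<sigma> = d - 2 + 2" using 2 d by simp
      show "\<rho> \<subseteq> \<sigma>" unfolding \<rho>_def by blast
      fix \<tau>' assume t: "\<tau>' \<in> K" "card \<tau>' = d - 2 + 2" "\<rho> \<subseteq> \<tau>'"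
      then have "\<tau>' \<in> hi d K" unfolding hi_def using d by simp
      then have "\<tau>' \<subseteq> \<sigma> \<or> \<tau>' \<in> gen_complex T" using hiD by blast
      then show "\<tau>' = \<sigma>"
      proof
        assume "\<tau>' \<subseteq> \<sigma>"
        then show ?thesis using card_subset_eq[OF fins] t(2) 2 d by simp
      next
        assume "\<tau>' \<in> gen_complex T"
        then have "\<rho> \<in> gen_complex T" using t(3) unfolding gen_iff by blast
        then show ?thesis using \<rho>notgen by blast
      qed
    qed
    define K1 where "K1 = K - {\<rho>,\<sigma>}"
    have "hi d K1 = hi d (gen_complex T)"
    proof
      show "hi d K1 \<subseteq> hi d (gen_complex T)"
      proof
        fix \<tau> assume a: "\<tau> \<in> hi d K1"
        then have a1: "\<tau> \<in> hi d K" "\<tau> \<noteq> \<sigma>" "d \<le> card \<tau>" unfolding K1_def hi_def by auto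
        have "\<not> \<tau> \<subseteq> \<sigma>"
        proof
          assume s: "\<tau> \<subseteq> \<sigma>"
          then have "card \<tau> \<le> card \<sigma>" using card_mono[OF fins] by blast
          then have "card \<tau> = card \<sigma>" using a1(3) 2 by simp
          then show False using card_subset_eq[OF fins s] a1(2) by simp
        qed
        then show "\<tau> \<in> hi d (gen_complex T)" using hiD[OF a1(1)] a1(3) unfolding hi_def by blast
      qed
      show "hi d (gen_complex T) \<subseteq> hi d K1"
      proof
        fix \<tau> assume a: "\<tau> \<in> hi d (gen_complex T)"
        then have "\<tau> \<in> K" "\<tau> \<noteq> \<sigma>" "\<tau> \<noteq> \<rho>" using hiT snotgen \<rho>notgen unfolding hi_def by auto
        then show "\<tau> \<in> hi d K1" using a unfolding K1_def hi_def by auto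
      qed
    qed
    moreover have "mid d (gen_complex T) \<subseteq> K1"
    proof
      fix \<tau> assume a: "\<tau> \<in> mid d (gen_complex T)"
      then have "\<tau> \<in> K" "\<tau> \<noteq> \<rho>" using midT \<rho>notgen unfolding mid_def by auto
      moreover have "\<tau> \<noteq> \<sigma>" using a 2 unfolding mid_def by auto
      ultimately show "\<tau> \<in> K1" unfolding K1_def by blast
    qed
    moreover have "(stp d)\<^sup>*\<^sup>* K K1" using coll unfolding K1_def stp_def by blast
    ultimately show ?thesis by blast
  next
    case 3
    have "card T < card \<sigma>" using 3 cT by simp
    then obtain p0 where p0s: "p0 \<in> \<sigma>" and free: "\<forall>\<sigma>'\<in>T. \<not> \<sigma>-{p0} \<subseteq> \<sigma>'"
      using exists_free_facet[OF finT fins _ nsub] by blast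
    define P where "P = {v\<in>\<sigma>. \<forall>\<sigma>'\<in>T. \<not> \<sigma>-{v} \<subseteq> \<sigma>'}"
    have p0: "p0 \<in> P" using p0s free unfolding P_def by blast
    have Ps: "P \<subseteq> \<sigma>" unfolding P_def by blast
    define \<zeta> where "\<zeta> = \<sigma> - {p0}"
    have c\<zeta>: "card \<zeta> = d" using card_Diff_singleton[OF p0s] 3 unfolding \<zeta>_def by simp
    have \<zeta>notgen: "\<zeta> \<notin> gen_complex T" using free unfolding \<zeta>_def by (simp add: gen_iff)
    have \<zeta>K: "\<zeta> \<in> K" using hiI[of \<zeta>] c\<zeta> unfolding \<zeta>_def hi_def by simp
    have \<sigma>K: "\<sigma> \<in> K" using hiI[of \<sigma>] 3 unfolding hi_def by simp
    have coll: "elem_collapse (d-1) K (K - {\<zeta>,\<sigma>})"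
    proof (rule collapse_intro[OF \<zeta>K _ \<sigma>K])
      show "card \<zeta> = d - 1 + 1" using c\<zeta> d by simp
      show "card \<sigma> = d - 1 + 2" using 3 d by simp
      show "\<zeta> \<subseteq> \<sigma>" unfolding \<zeta>_def by blast
      fix \<tau>' assume t: "\<tau>' \<in> K" "card \<tau>' = d - 1 + 2" "\<zeta> \<subseteq> \<tau>'"
      then have "\<tau>' \<in> hi d K" unfolding hi_def using d by simp
      then have "\<tau>' \<subseteq> \<sigma> \<or> \<tau>' \<in> gen_complex T" using hiD by blast
      then show "\<tau>' = \<sigma>"
      proof
        assume "\<tau>' \<subseteq> \<sigma>"
        then show ?thesis using card_subset_eq[OF fins] t(2) 3 d by simp
      next
        assume "\<tau>' \<in> gen_complex T"
        then have "\<zeta> \<in> gen_complex T" using t(3) unfolding gen_iff by blast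
        then show ?thesis using \<zeta>notgen by blast
      qed
    qed
    define K2 where "K2 = K - {\<zeta>,\<sigma>}"
    define F where "F = P - {p0}"
    have FP: "F \<subseteq> P" "p0 \<notin> F" unfolding F_def by blast+
    have hiK2: "hi d K2 = hi d (gen_complex T) \<union> (\<lambda>p. \<sigma>-{p}) ` F"
    proof
      show "hi d K2 \<subseteq> hi d (gen_complex T) \<union> (\<lambda>p. \<sigma>-{p}) ` F"
      proof
        fix \<tau> assume a: "\<tau> \<in> hi d K2"
        then have a1: "\<tau> \<in> hi d K" "\<tau> \<noteq> \<sigma>" "\<tau> \<noteq> \<zeta>" "d \<le> card \<tau>" unfolding K2_def hi_def by auto
        from hiD[OF a1(1)] show "\<tau> \<in> hi d (gen_complex T) \<union> (\<lambda>p. \<sigma>-{p}) ` F"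
        proof
          assume "\<tau> \<in> gen_complex T"
          then show ?thesis using a1(4) unfolding hi_def by blast
        next
          assume s: "\<tau> \<subseteq> \<sigma>"
          have "card \<sigma> \<le> card \<tau> + 1" using a1(4) 3 by simp
          then obtain v where v: "v \<in> \<sigma>" "\<tau> = \<sigma> - {v}" using facet_char[OF fins s] a1(2) by blast
          show ?thesis
          proof (cases "v \<in> P")
            case True
            then have "v \<noteq> p0" using v a1(3) \<zeta>_def by blast
            then have "v \<in> F" using True F_def by blast
            then show ?thesis using v by blast
          next
            case False
            then obtain \<sigma>' where "\<sigma>' \<in> T" "\<sigma> - {v} \<subseteq> \<sigma>'" using v unfolding P_def by blast
            then have "\<tau> \<in> gen_complex T" using v unfolding gen_iff by blast
            then show ?thesis using a1(4) unfolding hi_def by blast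
          qed
        qed
      qed
      show "hi d (gen_complex T) \<union> (\<lambda>p. \<sigma>-{p}) ` F \<subseteq> hi d K2"
      proof
        fix \<tau> assume "\<tau> \<in> hi d (gen_complex T) \<union> (\<lambda>p. \<sigma>-{p}) ` F"
        then show "\<tau> \<in> hi d K2"
        proof
          assume a: "\<tau> \<in> hi d (gen_complex T)"
          then have "\<tau> \<in> K" "\<tau> \<noteq> \<sigma>" "\<tau> \<noteq> \<zeta>" using hiT snotgen \<zeta>notgen unfolding hi_def by auto
          then show "\<tau> \<in> hi d K2" using a unfolding K2_def hi_def by auto
        next
          assume "\<tau> \<in> (\<lambda>p. \<sigma>-{p}) ` F"
          then obtain p where p: "p \<in> F" "\<tau> = \<sigma> - {p}" by blast
          have ps: "p \<in> \<sigma>" "p \<noteq> p0" using p(1) Ps F_def by auto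
          have ct: "card \<tau> = d" using card_Diff_singleton[OF ps(1)] 3 p(2) by simp
          have "\<tau> \<in> K" using hiI[of \<tau>] ct p(2) unfolding hi_def by simp
          moreover have "\<tau> \<noteq> \<sigma>" using ps p(2) by blast
          moreover have "\<tau> \<noteq> \<zeta>" using ps p(2) p0s unfolding \<zeta>_def by blast
          ultimately show "\<tau> \<in> hi d K2" using ct unfolding K2_def hi_def by auto
        qed
      qed
    qed
    have midK2: "mid d (gen_complex T) \<subseteq> K2"
    proof
      fix \<tau> assume a: "\<tau> \<in> mid d (gen_complex T)"
      then have "\<tau> \<in> K" using midT by blast
      moreover have "\<tau> \<noteq> \<sigma>" "\<tau> \<noteq> \<zeta>" using a 3 c\<zeta> unfolding mid_def by auto
      ultimately show "\<tau> \<in> K2" unfolding K2_def by blast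
    qed
    have cK2: "\<forall>\<rho>\<subseteq>\<sigma>. card \<rho> + 1 = d \<longrightarrow> (\<exists>p\<in>F. p\<notin>\<rho>) \<longrightarrow> \<rho>\<in>K2"
    proof (intro allI impI)
      fix \<rho> assume r: "\<rho> \<subseteq> \<sigma>" "card \<rho> + 1 = d" "\<exists>p\<in>F. p\<notin>\<rho>"
      have "\<rho> \<in> K" using midI r by blast
      moreover have "\<rho> \<noteq> \<sigma>" "\<rho> \<noteq> \<zeta>" using r(2) 3 c\<zeta> by auto
      ultimately show "\<rho> \<in> K2" unfolding K2_def by blast
    qed
    have cT2: "card T + 2 \<le> card \<sigma>" using cT 3 by simp
    obtain K1 where K1: "(stp d)\<^sup>*\<^sup>* K2 K1" "hi d K1 = hi d (gen_complex T)" "mid d (gen_complex T) \<subseteq> K1"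
      using phase[OF d finT fins 3 nsub cT2 P_def p0 FP hiK2 midK2 cK2] by blast
    have "stp d K K2" using coll unfolding stp_def K2_def by blast
    then have "(stp d)\<^sup>*\<^sup>* K K1" using K1(1) by (rule converse_rtranclp_into_rtranclp)
    then show ?thesis using K1 by blast
  qed
qed

lemma main:
  fixes d :: nat
  assumes d: "d > 1"
  shows "finite T \<Longrightarrow> card T \<le> d \<Longrightarrow> \<forall>\<sigma>\<in>T. finite \<sigma> \<and> card \<sigma> \<le> d+1
    \<Longrightarrow> hi d K = hi d (gen_complex T) \<Longrightarrow> mid d (gen_complex T) \<subseteq> K
    \<Longrightarrow> \<exists>K'. (stp d)\<^sup>*\<^sup>* K K' \<and> (\<forall>\<tau>\<in>K'. card \<tau> \<noteq> d+1 \<and> card \<tau> \<noteq> d)"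
proof (induction T arbitrary: K rule: finite_induct)
  case empty
  have "hi d K = {}" using empty.prems(3) by (simp add: hi_def gen_complex_def)
  then have "\<forall>\<tau>\<in>K. card \<tau> \<noteq> d+1 \<and> card \<tau> \<noteq> d" unfolding hi_def by auto
  moreover have "(stp d)\<^sup>*\<^sup>* K K" by (rule rtranclp.rtrancl_refl)
  ultimately show ?case by blast
next
  case (insert \<sigma> T)
  have cT: "card T + 1 \<le> d" using insert.prems(1) insert.hyps(1,2) by simp
  have s: "finite \<sigma>" "card \<sigma> \<le> d+1" using insert.prems(2) by auto
  obtain K1 where K1: "(stp d)\<^sup>*\<^sup>* K K1" "hi d K1 = hi d (gen_complex T)" "mid d (gen_complex T) \<subseteq> K1"
    using reduce[OF d insert.hyps(1) s cT insert.prems(3,4)] by blast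
  have "card T \<le> d" using cT by simp
  moreover have "\<forall>\<sigma>\<in>T. finite \<sigma> \<and> card \<sigma> \<le> d+1" using insert.prems(2) by blast
  ultimately obtain K' where K': "(stp d)\<^sup>*\<^sup>* K1 K'" "\<forall>\<tau>\<in>K'. card \<tau> \<noteq> d+1 \<and> card \<tau> \<noteq> d"
    using insert.IH[OF _ _ K1(2,3)] by blast
  have "(stp d)\<^sup>*\<^sup>* K K'" using K1(1) K'(1) by (rule rtranclp_trans)
  then show ?case using K'(2) by blast
qed

theorem claim3p3:
  fixes d n :: nat and S :: "nat set set"
  assumes "d > 1"
    and "finite S" and "card S \<le> d"
    and "\<forall>\<sigma>\<in>S. \<sigma> \<subseteq> {1..n} \<and> \<sigma> \<noteq> {} \<and> card \<sigma> \<le> d + 1"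
  shows "\<exists>K'. (\<lambda>K K'. elem_collapse (d - 1) K K' \<or> elem_collapse (d - 2) K K')\<^sup>*\<^sup>*
              (gen_complex S) K'
           \<and> (\<forall>\<sigma>\<in>K'. card \<sigma> \<noteq> d + 1 \<and> card \<sigma> \<noteq> d)"
proof -
  have fin: "\<forall>\<sigma>\<in>S. finite \<sigma> \<and> card \<sigma> \<le> d+1"
  proof
    fix \<sigma> assume "\<sigma> \<in> S"
    then have "\<sigma> \<subseteq> {1..n}" "card \<sigma> \<le> d+1" using assms(4) by auto
    then show "finite \<sigma> \<and> card \<sigma> \<le> d+1" using finite_subset[OF _ finite_atLeastAtMost] by blast
  qed
  have "\<exists>K'. (stp d)\<^sup>*\<^sup>* (gen_complex S) K' \<and> (\<forall>\<tau>\<in>K'. card \<tau> \<noteq> d+1 \<and> card \<tau> \<noteq> d)"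
    by (rule main[OF assms(1) assms(2) assms(3) fin]) (auto simp: mid_def)
  then obtain K' where K': "(stp d)\<^sup>*\<^sup>* (gen_complex S) K'" "\<forall>\<tau>\<in>K'. card \<tau> \<noteq> d+1 \<and> card \<tau> \<noteq> d"
    by blast
  have e: "(\<lambda>K K'. elem_collapse (d - 1) K K' \<or> elem_collapse (d - 2) K K') = stp d"
    by (intro ext) (simp add: stp_def)
  show ?thesis unfolding e using K' by blast
qed


end
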